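(* Let $n,m,t,\ell$ be positive integers with $\ell\le t$, let $\sigma\in\mathcal{S}_n$, and let $i_1,\ldots,i_\ell\in[n]$ be distinct positions such that $\sigma(i_j)>m$ for all $j\in[\ell]$ and $\sigma(i_j)\le\sigma(i_{j+1})-2$ for $j\in[\ell-1]$. Define $\sigma_e\in[n]^n$ by $\sigma_e(i)=\sigma(i)-1$ for $i\in\{i_1,\ldots,i_\ell\}$ and $\sigma_e(i)=\sigma(i)$ otherwise. For each $j\in[\ell]$ let $i'_j$ be the position with $\sigma(i'_j)=\sigma(i_j)-1$, so that $\sigma_e(i_j)=\sigma_e(i'_j)=\sigma(i_j)-1$ are repeated values of $\sigma_e$. Then for every $i\in[n]$, $$\mathcal{L}(\sigma_e)(i)=\begin{cases}\mathcal{L}(\sigma)(i)-1,&\text{if } i=i'_j \text{ and } i'_j>i_j \text{ for some } j\in[\ell],\\ \mathcal{L}(\sigma)(i),&\text{otherwise.}\end{cases}$$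
   Context: $[n]=\{1,\ldots,n\}$ and $\mathcal{S}_n$ is the set of permutations of $[n]$, written as sequences $(\sigma(1),\ldots,\sigma(n))$. For any sequence $\pi\in[n]^n$, its Lehmer encoding $\mathcal{L}(\pi)$ is the sequence with $\mathcal{L}(\pi)(i)=|\{j: j<i,\ \pi(j)>\pi(i)\}|$ for $i\in[n]$. *)

theory Defs
  imports "HOL-Combinatorics.Permutations"
begin

definition lehmer :: "nat \<Rightarrow> (nat \<Rightarrow> nat) \<Rightarrow> nat \<Rightarrow> nat" where
  "lehmer n \<pi> i = card {j \<in> {1..n}. j < i \<and> \<pi> j > \<pi> i}"

end

theory Submission
  imports Defs
begin

theorem lemma1:
  fixes n m t l :: nat and \<sigma> \<sigma>e :: "nat \<Rightarrow> nat" and I :: "nat \<Rightarrow> nat"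
  assumes "n > 0" "m > 0" "t > 0" "l > 0" "l \<le> t"
    and "\<sigma> permutes {1..n}"
    and "inj_on I {1..l}" "I ` {1..l} \<subseteq> {1..n}"
    and "\<forall>j\<in>{1..l}. \<sigma> (I j) > m"
    and "\<forall>j\<in>{1..l-1}. \<sigma> (I j) \<le> \<sigma> (I (j+1)) - 2"
    and "\<forall>i. \<sigma>e i = (if i \<in> I ` {1..l} then \<sigma> i - 1 else \<sigma> i)"
  shows "\<forall>i\<in>{1..n}. lehmer n \<sigma>e i =
           (if \<exists>j\<in>{1..l}. i = inv \<sigma> (\<sigma> (I j) - 1) \<and> inv \<sigma> (\<sigma> (I j) - 1) > I j
            then lehmer n \<sigma> i - 1 else lehmer n \<sigma> i)"
proof
  fix i assume i: "i \<in> {1..n}"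
  define S where "S = I ` {1..l}"
  have perm: "\<sigma> permutes {1..n}" by fact
  have injs: "inj \<sigma>" using perm permutes_inj by blast
  have pos: "\<And>a. a \<in> {1..l} \<Longrightarrow> \<sigma> (I a) \<ge> 2"
  proof -
    fix a assume "a \<in> {1..l}"
    then have "\<sigma> (I a) > m" using assms(9) by blast
    then show "\<sigma> (I a) \<ge> 2" using assms(2) by linarith
  qed
  have step: "\<And>a. a \<in> {1..l-1} \<Longrightarrow> \<sigma> (I a) + 2 \<le> \<sigma> (I (a+1))"
  proof -
    fix a assume a: "a \<in> {1..l-1}"
    then have "\<sigma> (I a) \<le> \<sigma> (I (a+1)) - 2" using assms(10) by blast
    moreover have "\<sigma> (I a) \<ge> 2" using pos a by auto
    ultimately show "\<sigma> (I a) + 2 \<le> \<sigma> (I (a+1))" by linarith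
  qed
  have mono: "\<And>a d. a \<ge> 1 \<Longrightarrow> a + Suc d \<le> l \<Longrightarrow> \<sigma> (I a) + 2 \<le> \<sigma> (I (a + Suc d))"
  proof -
    fix a d :: nat assume a1: "a \<ge> 1"
    show "a + Suc d \<le> l \<Longrightarrow> \<sigma> (I a) + 2 \<le> \<sigma> (I (a + Suc d))"
    proof (induction d)
      case 0 then show ?case using step[of a] a1 by auto
    next
      case (Suc d)
      then have "\<sigma> (I a) + 2 \<le> \<sigma> (I (a + Suc d))" by auto
      moreover have "\<sigma> (I (a + Suc d)) + 2 \<le> \<sigma> (I (a + Suc d + 1))"
        using step[of "a + Suc d"] Suc.prems a1 by auto
      ultimately show ?case by auto
    qed
  qed
  have noadj: "\<And>x y. x \<in> S \<Longrightarrow> y \<in> S \<Longrightarrow> \<sigma> x \<noteq> \<sigma> y + 1"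
  proof -
    fix x y assume "x \<in> S" "y \<in> S"
    then obtain a b where ab: "a \<in> {1..l}" "b \<in> {1..l}" "x = I a" "y = I b" unfolding S_def by blast
    consider "a = b" | "a < b" | "b < a" by linarith
    then show "\<sigma> x \<noteq> \<sigma> y + 1"
    proof cases
      case 1 then show ?thesis using ab by simp
    next
      case 2
      then obtain d where "b = a + Suc d" using less_imp_Suc_add[OF 2] by (elim exE) simp
      moreover have "1 \<le> a" "a + Suc d \<le> l" using ab(1,2) \<open>b = a + Suc d\<close> by auto
      ultimately have "\<sigma> (I a) + 2 \<le> \<sigma> (I b)" using mono[of a d] by metis
      then show ?thesis unfolding ab(3,4) by linarith
    next
      case 3
      then obtain d where "a = b + Suc d" using less_imp_Suc_add[OF 3] by (elim exE) simp
      moreover have "1 \<le> b" "b + Suc d \<le> l" using ab(1,2) \<open>a = b + Suc d\<close> by auto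
      ultimately have "\<sigma> (I b) + 2 \<le> \<sigma> (I a)" using mono[of b d] by metis
      then show ?thesis unfolding ab(3,4) by linarith
    qed
  qed
  define A where "A = {j \<in> {1..n}. j < i \<and> \<sigma> j > \<sigma> i}"
  define R where "R = {j. j \<in> S \<and> \<sigma> j = \<sigma> i + 1}"
  have se: "\<And>x. \<sigma>e x = (if x \<in> S then \<sigma> x - 1 else \<sigma> x)" using assms(11) S_def by auto
  have B: "{j \<in> {1..n}. j < i \<and> \<sigma>e j > \<sigma>e i} = A - R"
  proof (intro set_eqI iffI)
    fix j assume j: "j \<in> {j \<in> {1..n}. j < i \<and> \<sigma>e j > \<sigma>e i}"
    have ne: "\<sigma> j \<noteq> \<sigma> i" using j injs by (auto dest: injD)
    have "\<sigma> j > \<sigma> i" using j ne se[of j] se[of i] by (auto split: if_splits)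
    moreover have "j \<notin> R" using j se[of j] se[of i] noadj unfolding R_def by (auto split: if_splits)
    ultimately show "j \<in> A - R" using j unfolding A_def by auto
  next
    fix j assume j: "j \<in> A - R"
    have "\<sigma> j \<noteq> \<sigma> i + 1 \<or> j \<notin> S" using j unfolding R_def by auto
    moreover have "\<sigma> j > \<sigma> i" using j unfolding A_def by auto
    ultimately have "\<sigma>e j > \<sigma>e i" using se[of j] se[of i] noadj[of i j] by (auto split: if_splits)
    then show "j \<in> {j \<in> {1..n}. j < i \<and> \<sigma>e j > \<sigma>e i}" using j unfolding A_def by auto
  qed
  have finA: "finite A" unfolding A_def by auto
  have L1: "lehmer n \<sigma>e i = card (A - R)" unfolding lehmer_def B ..
  have L2: "lehmer n \<sigma> i = card A" unfolding lehmer_def A_def ..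
  show "lehmer n \<sigma>e i =
           (if \<exists>j\<in>{1..l}. i = inv \<sigma> (\<sigma> (I j) - 1) \<and> inv \<sigma> (\<sigma> (I j) - 1) > I j
            then lehmer n \<sigma> i - 1 else lehmer n \<sigma> i)"
  proof (cases "\<exists>j\<in>{1..l}. i = inv \<sigma> (\<sigma> (I j) - 1) \<and> inv \<sigma> (\<sigma> (I j) - 1) > I j")
    case True
    then obtain j where j: "j \<in> {1..l}" "i = inv \<sigma> (\<sigma> (I j) - 1)" "I j < i" by auto
    have "\<sigma> i = \<sigma> (I j) - 1" using j(2) perm by (simp add: permutes_inverses(1))
    then have si: "\<sigma> (I j) = \<sigma> i + 1" using pos[OF j(1)] by auto
    have Ij: "I j \<in> {1..n}" using j(1) assms(8) by (meson image_subset_iff)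
    have "A \<inter> R = {I j}"
    proof (intro set_eqI iffI)
      fix x assume "x \<in> A \<inter> R"
      then have "\<sigma> x = \<sigma> (I j)" using si unfolding R_def by auto
      then show "x \<in> {I j}" using injs by (auto dest: injD)
    next
      fix x assume "x \<in> {I j}"
      then show "x \<in> A \<inter> R" using si Ij j unfolding A_def R_def S_def by auto
    qed
    then have "card (A - R) = card A - 1" using finA
      using card_Diff_subset_Int[of A R] by simp
    then show ?thesis using True L1 L2 by simp
  next
    case False
    have "A \<inter> R = {}"
    proof (rule ccontr)
      assume "A \<inter> R \<noteq> {}"
      then obtain x where x: "x \<in> A" "x \<in> R" by auto
      then obtain j where j: "j \<in> {1..l}" "x = I j" unfolding R_def S_def by auto
      have "\<sigma> (I j) - 1 = \<sigma> i" using x j unfolding R_def by auto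
      then have "inv \<sigma> (\<sigma> (I j) - 1) = i" using injs by simp
      then show False using False j x unfolding A_def by auto
    qed
    then have "A - R = A" by auto
    then show ?thesis using L1 L2 by (subst if_not_P[OF False]) simp
  qed
qed

end
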